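(* Let $k$ be a field of characteristic $p>2$ ($p$ prime). For any $u,v,w\in k_1\langle X\rangle$, $$\kappa(u,vw)\equiv v^p\kappa(u,w)+w^p\kappa(u,v)\pmod{T^{(3)}}.$$ In particular, if $u,v\in k_0\langle X\rangle$ and $\alpha\in k$, then $\kappa(u,\alpha v)=\alpha^p\kappa(u,v)$.
   Context: $X=\{x_i\mid i\ge0\}$ is countably infinite; $k_1\langle X\rangle$ (resp. $k_0\langle X\rangle$) is the free unitary (resp. nonunitary) associative $k$-algebra on $X$. $[a,b]=ab-ba$, $[a,b,c]=[[a,b],c]$. $T^{(3)}$ is the $T$-ideal of $k_1\langle X\rangle$ (ideal invariant under all endomorphisms) generated by $[x_1,x_2,x_3]$. $\kappa(u,v)=[u,v]u^{p-1}v^{p-1}$. *)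

theory Defs
  imports Main "HOL-Computational_Algebra.Primes"
begin

text \<open>Free unitary associative k-algebra on X = {x_i | i >= 0}: an element is a
finitely supported function from words (lists of variable indices) to k.
The carrier is fa_carrier; k_0 is the subset with zero constant term.\<close>

type_synonym 'k fa = "nat list \<Rightarrow> 'k"

definition fa_carrier :: "('k::field) fa set" where
  "fa_carrier = {f. finite {w. f w \<noteq> 0}}"

definition fa_carrier0 :: "('k::field) fa set" where
  "fa_carrier0 = {f \<in> fa_carrier. f [] = 0}"

definition fa_zero :: "('k::field) fa" where
  "fa_zero = (\<lambda>w. 0)"

definition fa_one :: "('k::field) fa" where
  "fa_one = (\<lambda>w. if w = [] then 1 else 0)"

definition fa_var :: "nat \<Rightarrow> ('k::field) fa" where
  "fa_var i = (\<lambda>w. if w = [i] then 1 else 0)"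

definition fa_add :: "('k::field) fa \<Rightarrow> 'k fa \<Rightarrow> 'k fa" where
  "fa_add f g = (\<lambda>w. f w + g w)"

definition fa_sub :: "('k::field) fa \<Rightarrow> 'k fa \<Rightarrow> 'k fa" where
  "fa_sub f g = (\<lambda>w. f w - g w)"

definition fa_smult :: "'k::field \<Rightarrow> 'k fa \<Rightarrow> 'k fa" where
  "fa_smult c f = (\<lambda>w. c * f w)"

definition fa_mult :: "('k::field) fa \<Rightarrow> 'k fa \<Rightarrow> 'k fa" where
  "fa_mult f g = (\<lambda>w. \<Sum>i\<le>length w. f (take i w) * g (drop i w))"

definition fa_pow :: "('k::field) fa \<Rightarrow> nat \<Rightarrow> 'k fa" where
  "fa_pow f n = ((fa_mult f) ^^ n) fa_one"

definition fa_comm :: "('k::field) fa \<Rightarrow> 'k fa \<Rightarrow> 'k fa" where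
  "fa_comm a b = fa_sub (fa_mult a b) (fa_mult b a)"

definition fa_comm3 :: "('k::field) fa \<Rightarrow> 'k fa \<Rightarrow> 'k fa \<Rightarrow> 'k fa" where
  "fa_comm3 a b c = fa_comm (fa_comm a b) c"

definition fa_kappa :: "nat \<Rightarrow> ('k::field) fa \<Rightarrow> 'k fa \<Rightarrow> 'k fa" where
  "fa_kappa p u v = fa_mult (fa_mult (fa_comm u v) (fa_pow u (p - 1))) (fa_pow v (p - 1))"

definition fa_ideal :: "('k::field) fa set \<Rightarrow> bool" where
  "fa_ideal I \<longleftrightarrow> I \<subseteq> fa_carrier \<and> fa_zero \<in> I
     \<and> (\<forall>a\<in>I. \<forall>b\<in>I. fa_add a b \<in> I)
     \<and> (\<forall>a\<in>I. \<forall>c. fa_smult c a \<in> I)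
     \<and> (\<forall>a\<in>I. \<forall>r\<in>fa_carrier. fa_mult r a \<in> I \<and> fa_mult a r \<in> I)"

definition fa_endo :: "(('k::field) fa \<Rightarrow> 'k fa) \<Rightarrow> bool" where
  "fa_endo \<phi> \<longleftrightarrow> (\<forall>f\<in>fa_carrier. \<phi> f \<in> fa_carrier)
     \<and> (\<forall>f\<in>fa_carrier. \<forall>g\<in>fa_carrier. \<phi> (fa_add f g) = fa_add (\<phi> f) (\<phi> g))
     \<and> (\<forall>f\<in>fa_carrier. \<forall>c. \<phi> (fa_smult c f) = fa_smult c (\<phi> f))
     \<and> (\<forall>f\<in>fa_carrier. \<forall>g\<in>fa_carrier. \<phi> (fa_mult f g) = fa_mult (\<phi> f) (\<phi> g))
     \<and> \<phi> fa_one = fa_one"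

definition fa_T_ideal :: "('k::field) fa set \<Rightarrow> bool" where
  "fa_T_ideal I \<longleftrightarrow> fa_ideal I \<and> (\<forall>\<phi>. fa_endo \<phi> \<longrightarrow> \<phi> ` I \<subseteq> I)"

definition T3 :: "('k::field) fa set" where
  "T3 = \<Inter> {I. fa_T_ideal I \<and> fa_comm3 (fa_var 1) (fa_var 2) (fa_var 3) \<in> I}"

end

theory Submission
  imports Defs
begin


definition cm :: "'a::ring_1 \<Rightarrow> 'a \<Rightarrow> 'a" where "cm a b = a*b - b*a"

lemma cm_add: "cm (a+b) c = cm a c + cm b c" by (simp add: cm_def algebra_simps)
lemma cm_multL: "cm (a*b) c = a * cm b c + cm a c * b" by (simp add: cm_def algebra_simps)
lemma cm_multR: "cm a (b*c) = b * cm a c + cm a b * c" by (simp add: cm_def algebra_simps)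
lemma cm_neg: "cm a b = - cm b a" by (simp add: cm_def)
lemma cm_1: "cm a 1 = 0" "cm 1 a = 0" "cm a a = 0" by (simp_all add: cm_def)

definition kap :: "nat \<Rightarrow> 'a::ring_1 \<Rightarrow> 'a \<Rightarrow> 'a" where "kap q a b = cm a b * a^q * b^q"

inductive_set mon :: "'a::ring_1 set \<Rightarrow> 'a set" for A where
  mon1: "1 \<in> mon A" | monS: "a \<in> A \<Longrightarrow> X \<in> mon A \<Longrightarrow> a*X \<in> mon A"

lemma mon_mult: "X \<in> mon A \<Longrightarrow> Y \<in> mon A \<Longrightarrow> X*Y \<in> mon A"
  by (induct X rule: mon.induct) (auto simp: mult.assoc intro: mon.intros)

lemma mon_gen: "a \<in> A \<Longrightarrow> a \<in> mon A"
  using monS[OF _ mon1] by fastforce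

lemma mon_pow: "a \<in> mon A \<Longrightarrow> a^n \<in> mon A"
  by (induct n) (auto intro: mon_mult mon1)

locale lie2 =
  fixes J :: "'a::ring_1 set"
  assumes J0: "0 \<in> J" and Jadd: "x\<in>J \<Longrightarrow> y\<in>J \<Longrightarrow> x+y\<in>J"
   and Jneg: "x\<in>J \<Longrightarrow> -x\<in>J"
   and Jl: "x\<in>J \<Longrightarrow> r*x\<in>J" and Jr: "x\<in>J \<Longrightarrow> x*r\<in>J"
   and J3: "cm (cm a b) c \<in> J" and J2: "x+x\<in>J \<Longrightarrow> x\<in>J"
begin

definition cg (infix "\<approx>" 50) where "a \<approx> b \<longleftrightarrow> a - b \<in> J"

lemma Jdiff: "x\<in>J \<Longrightarrow> y\<in>J \<Longrightarrow> x-y\<in>J"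
  using Jadd[of x "-y"] Jneg by simp

lemma cg_refl: "a = b \<Longrightarrow> a \<approx> b" using J0 by (simp add: cg_def)
lemma cg_trans: "a \<approx> b \<Longrightarrow> b \<approx> c \<Longrightarrow> a \<approx> c"
  unfolding cg_def using Jadd by fastforce
lemma cg_sym: "a \<approx> b \<Longrightarrow> b \<approx> a"
  unfolding cg_def using Jneg by fastforce
lemma cg_L: "a \<approx> b \<Longrightarrow> c*a \<approx> c*b"
  unfolding cg_def using Jl[of "a-b" c] by (simp add: algebra_simps)
lemma cg_R: "a \<approx> b \<Longrightarrow> a*c \<approx> b*c"
  unfolding cg_def using Jr[of "a-b" c] by (simp add: algebra_simps)
lemma cg_J: "a \<approx> b \<Longrightarrow> b \<in> J \<Longrightarrow> a \<in> J"
  unfolding cg_def using Jadd by fastforce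

lemma cen: "cm a b * c \<approx> c * cm a b"
  using J3[of a b c] by (simp add: cg_def cm_def)

lemma F2: "cm x y * cm x z \<in> J"
proof -
  have id: "cm (cm x (y*z)) x = cm y x * cm x z + y * cm (cm x z) x + cm x y * cm z x + cm (cm x y) x * z"
    by (simp only: cm_multR cm_add cm_multL add.assoc add.left_commute)
  have "cm y x * cm x z + cm x y * cm z x = cm (cm x (y*z)) x - y * cm (cm x z) x - cm (cm x y) x * z"
    unfolding id by (simp add: algebra_simps)
  also have "\<dots> \<in> J" by (intro Jdiff J3 Jl[OF J3] Jr[OF J3])
  finally have "- (cm x y * cm x z + cm x y * cm x z) \<in> J"
    using cm_neg[of y x] cm_neg[of z x] by simp
  from Jneg[OF this] have "cm x y * cm x z + cm x y * cm x z \<in> J" by simp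
  thus ?thesis by (rule J2)
qed

lemma shared:
  assumes "a = x \<or> b = x \<or> a = y \<or> b = y \<or> a = b"
  shows "cm x y * cm a b \<in> J"
proof -
  have n: "cm s t = - cm t s" for s t :: 'a by (simp add: cm_def)
  from assms show ?thesis
  proof (elim disjE)
    assume "a = x" thus ?thesis using F2 by simp
  next
    assume "b = x" thus ?thesis using Jneg[OF F2[of x y a]] n[of a x] by simp
  next
    assume "a = y" thus ?thesis using Jneg[OF F2[of y x b]] n[of x y] by simp
  next
    assume "b = y" thus ?thesis using F2[of y x a] n[of x y] n[of a y] by simp
  next
    assume "a = b" thus ?thesis using J0 by (simp add: cm_def)
  qed
qed

lemma swap_gen:
  assumes kill: "\<And>a b. a\<in>A \<Longrightarrow> b\<in>A \<Longrightarrow> cm x y * cm a b \<in> J"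
  assumes X: "X \<in> mon A" and Y: "Y \<in> mon A" and Z: "Z \<in> mon A"
  shows "cm x y * Z * (X*Y) \<approx> cm x y * Z * (Y*X)"
proof -
  define D where "D = cm x y"
  have c1: "D * cm a Y0 \<in> J" if aA: "a \<in> A" and Y0: "Y0 \<in> mon A" for a Y0
    using Y0
  proof (induct Y0 rule: mon.induct)
    case mon1 thus ?case using J0 by (simp add: cm_def)
  next
    case (monS b Y')
    have e: "cm a (b*Y') = b * cm a Y' + cm a b * Y'" by (rule cm_multR)
    have "D*(b*cm a Y') \<in> J"
    proof (rule cg_J)
      show "D*(b*cm a Y') \<approx> b*(D*cm a Y')"
        using cg_R[OF cen[of x y b], of "cm a Y'"] by (simp add: D_def mult.assoc)
      show "b*(D*cm a Y') \<in> J" by (rule Jl[OF monS(3)])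
    qed
    moreover have "D*(cm a b * Y') \<in> J"
      using Jr[OF kill[OF aA monS(1)], of Y'] by (simp add: D_def mult.assoc)
    ultimately show ?case unfolding e by (simp add: distrib_left Jadd)
  qed
  have c2: "D * cm X0 Y \<in> J" if X0: "X0 \<in> mon A" for X0
    using X0
  proof (induct X0 rule: mon.induct)
    case mon1 thus ?case using J0 by (simp add: cm_def)
  next
    case (monS a X')
    have e: "cm (a*X') Y = a * cm X' Y + cm a Y * X'" by (rule cm_multL)
    have "D*(a*cm X' Y) \<in> J"
    proof (rule cg_J)
      show "D*(a*cm X' Y) \<approx> a*(D*cm X' Y)"
        using cg_R[OF cen[of x y a], of "cm X' Y"] by (simp add: D_def mult.assoc)
      show "a*(D*cm X' Y) \<in> J" by (rule Jl[OF monS(3)])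
    qed
    moreover have "D*(cm a Y * X') \<in> J"
      using Jr[OF c1[OF monS(1) Y], of X'] by (simp add: mult.assoc)
    ultimately show ?case unfolding e by (simp add: distrib_left Jadd)
  qed
  have "D*Z*cm X Y \<in> J"
  proof (rule cg_J)
    show "D*Z*cm X Y \<approx> Z*(D*cm X Y)"
      using cg_R[OF cen[of x y Z], of "cm X Y"] by (simp add: D_def mult.assoc)
    show "Z*(D*cm X Y) \<in> J" by (rule Jl[OF c2[OF X]])
  qed
  moreover have "cm x y * Z * (X*Y) - cm x y * Z*(Y*X) = D*Z*cm X Y"
    unfolding D_def cm_def by (simp add: right_diff_distrib mult.assoc)
  ultimately show ?thesis unfolding cg_def by simp
qed


lemma cg_add: "a \<approx> b \<Longrightarrow> c \<approx> d \<Longrightarrow> a + c \<approx> b + d"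
  unfolding cg_def using Jadd[of "a-b" "c-d"] by (simp add: algebra_simps)

declare cg_trans[trans]

lemma pw:
  assumes sw: "\<And>X Y Z. X\<in>M \<Longrightarrow> Y\<in>M \<Longrightarrow> Z\<in>M \<Longrightarrow> D*Z*(X*Y) \<approx> D*Z*(Y*X)"
    and mm: "\<And>X Y. X\<in>M \<Longrightarrow> Y\<in>M \<Longrightarrow> X*Y\<in>M" and mp: "\<And>X n. X\<in>M \<Longrightarrow> X^n\<in>M"
    and v: "v\<in>M" and w: "w\<in>M" and Z: "Z\<in>M"
  shows "D*Z*(v*w)^n \<approx> D*Z*(v^n*w^n)"
proof (induct n)
  case 0 show ?case by (rule cg_refl) simp
next
  case (Suc n)
  have "D*Z*(v*w)^Suc n = (D*Z*(v*w)^n)*(v*w)" by (simp only: power_Suc2 mult.assoc)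
  also have "\<dots> \<approx> (D*Z*(v^n*w^n))*(v*w)" by (rule cg_R[OF Suc])
  also have "\<dots> = D*(Z*v^n)*(w^n*v)*w" by (simp only: mult.assoc)
  also have "\<dots> \<approx> D*(Z*v^n)*(v*w^n)*w" by (rule cg_R[OF sw]) (auto intro: mm mp v w Z)
  also have "\<dots> = D*Z*(v^Suc n*w^Suc n)" by (simp only: mult.assoc power_Suc2)
  finally show ?case .
qed


lemma main1: "kap q u (v*w) - (v^(Suc q) * kap q u w + w^(Suc q) * kap q u v) \<in> J"
proof -
  define M where "M = mon {u,v,w}"
  define D1 where "D1 = cm u w"
  define D2 where "D2 = cm u v"
  have mm: "\<And>X Y. X\<in>M \<Longrightarrow> Y\<in>M \<Longrightarrow> X*Y\<in>M" unfolding M_def by (rule mon_mult)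
  have mp: "\<And>X n. X\<in>M \<Longrightarrow> X^n\<in>M" unfolding M_def by (rule mon_pow)
  have uM: "u\<in>M" and vM: "v\<in>M" and wM: "w\<in>M" and oM: "1\<in>M"
    unfolding M_def by (auto intro: mon_gen mon1)
  have k1: "cm u w * cm a b \<in> J" if "a\<in>{u,v,w}" "b\<in>{u,v,w}" for a b
    by (rule shared) (use that in auto)
  have k2: "cm u v * cm a b \<in> J" if "a\<in>{u,v,w}" "b\<in>{u,v,w}" for a b
    by (rule shared) (use that in auto)
  have sw1: "D1*Z*(X*Y) \<approx> D1*Z*(Y*X)" if "X\<in>M" "Y\<in>M" "Z\<in>M" for X Y Z
    unfolding D1_def by (rule swap_gen[OF k1]) (use that in \<open>auto simp: M_def\<close>)
  have sw2: "D2*Z*(X*Y) \<approx> D2*Z*(Y*X)" if "X\<in>M" "Y\<in>M" "Z\<in>M" for X Y Z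
    unfolding D2_def by (rule swap_gen[OF k2]) (use that in \<open>auto simp: M_def\<close>)
  have pw1: "D1*Z*(v*w)^n \<approx> D1*Z*(v^n*w^n)" if "Z\<in>M" for Z n
    by (rule pw[OF sw1 mm mp vM wM that])
  have pw2: "D2*Z*(v*w)^n \<approx> D2*Z*(v^n*w^n)" if "Z\<in>M" for Z n
    by (rule pw[OF sw2 mm mp vM wM that])
  have Mi: "u^q\<in>M" "v^q\<in>M" "w^q\<in>M" "v^Suc q\<in>M" "w^Suc q\<in>M" "u^q*v\<in>M" "u^q*w\<in>M" "u^q*v^q \<in> M"
    by (auto intro!: mm mp uM vM wM)
  have "v*D1*u^q*(v*w)^q \<approx> D1*v*u^q*(v*w)^q"
    using cg_R[OF cg_R[OF cg_sym[OF cen[of u w v]]]] unfolding D1_def .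
  also have "\<dots> \<approx> D1*u^q*v*(v*w)^q"
    using cg_R[OF sw1[OF vM Mi(1) oM], of "(v*w)^q"] by (simp add: mult.assoc)
  also have "\<dots> \<approx> D1*(u^q*v)*(v^q*w^q)"
    using pw1[OF Mi(6), of q] by (simp add: mult.assoc)
  also have "\<dots> \<approx> D1*v^Suc q*u^q*w^q"
    using cg_R[OF sw1[OF Mi(1) Mi(4) oM], of "w^q"] by (simp add: mult.assoc)
  also have "\<dots> \<approx> v^Suc q*D1*u^q*w^q"
    using cg_R[OF cg_R[OF cen[of u w "v^Suc q"]]] unfolding D1_def .
  finally have T1: "v*D1*u^q*(v*w)^q \<approx> v^Suc q * kap q u w"
    unfolding kap_def D1_def by (simp add: mult.assoc)
  have "D2*w*u^q*(v*w)^q \<approx> D2*u^q*w*(v*w)^q"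
    using cg_R[OF sw2[OF wM Mi(1) oM], of "(v*w)^q"] by (simp add: mult.assoc)
  also have "\<dots> \<approx> D2*(u^q*w)*(v^q*w^q)"
    using pw2[OF Mi(7), of q] by (simp add: mult.assoc)
  also have "\<dots> \<approx> D2*u^q*(v^q*w)*w^q"
    using cg_R[OF sw2[OF wM Mi(2) Mi(1)], of "w^q"] by (simp add: mult.assoc)
  also have "\<dots> \<approx> D2*w^Suc q*u^q*v^q"
    using sw2[OF Mi(8) Mi(5) oM] by (simp add: mult.assoc)
  also have "\<dots> \<approx> w^Suc q*D2*u^q*v^q"
    using cg_R[OF cg_R[OF cen[of u v "w^Suc q"]]] unfolding D2_def .
  finally have T2: "D2*w*u^q*(v*w)^q \<approx> w^Suc q * kap q u v"
    unfolding kap_def D2_def by (simp add: mult.assoc)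
  have "kap q u (v*w) = v*D1*u^q*(v*w)^q + D2*w*u^q*(v*w)^q"
    unfolding kap_def D1_def D2_def cm_multR by (simp add: distrib_right)
  with cg_add[OF T1 T2] show ?thesis by (simp add: cg_def)
qed
end



abbreviation sp :: "nat list \<Rightarrow> (nat list \<times> nat list) set" where
  "sp w \<equiv> {p. fst p @ snd p = w}"

lemma sp_eq: "sp w = (\<lambda>i. (take i w, drop i w)) ` {..length w}"
proof (rule set_eqI, rule iffI)
  fix p assume "p \<in> sp w"
  thus "p \<in> (\<lambda>i. (take i w, drop i w)) ` {..length w}"
    by (intro image_eqI[of _ _ "length (fst p)"]) (auto simp: prod_eq_iff)
qed auto

lemma finite_sp: "finite (sp w)" unfolding sp_eq by simp

lemma fa_mult_sp: "fa_mult f g w = (\<Sum>p\<in>sp w. f (fst p) * g (snd p))"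
  unfolding fa_mult_def
  by (rule sum.reindex_bij_witness[where i="\<lambda>p. length (fst p)" and j="\<lambda>i. (take i w, drop i w)"]) auto

lemma fa_mult_assoc: "fa_mult (fa_mult f g) h = fa_mult f (fa_mult g h)"
proof (rule ext)
  fix w
  have "fa_mult (fa_mult f g) h w = (\<Sum>p\<in>sp w. \<Sum>q\<in>sp (fst p). f (fst q) * g (snd q) * h (snd p))"
    by (simp add: fa_mult_sp sum_distrib_right)
  also have "\<dots> = (\<Sum>(p,q)\<in>Sigma (sp w) (\<lambda>p. sp (fst p)). f (fst q) * g (snd q) * h (snd p))"
    by (rule sum.Sigma) (auto simp: finite_sp)
  also have "\<dots> = (\<Sum>(p,q)\<in>Sigma (sp w) (\<lambda>p. sp (snd p)). f (fst p) * (g (fst q) * h (snd q)))"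
    by (rule sum.reindex_bij_witness[where j="\<lambda>(p,q). ((fst q, snd q @ snd p), (snd q, snd p))"
          and i="\<lambda>(p,q). ((fst p @ fst q, snd q), (fst p, fst q))"]) (auto simp: mult.assoc)
  also have "\<dots> = (\<Sum>p\<in>sp w. \<Sum>q\<in>sp (snd p). f (fst p) * (g (fst q) * h (snd q)))"
    by (rule sum.Sigma[symmetric]) (auto simp: finite_sp)
  also have "\<dots> = fa_mult f (fa_mult g h) w"
    by (simp add: fa_mult_sp sum_distrib_left)
  finally show "fa_mult (fa_mult f g) h w = fa_mult f (fa_mult g h) w" .
qed

lemma fa_mult_constL: "fa_mult (\<lambda>w. if w = [] then c else 0) f = fa_smult c f"
proof (rule ext)
  fix w
  have "(\<Sum>i\<le>length w. (if take i w = [] then c else 0) * f (drop i w)) =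
        (\<Sum>i\<le>length w. if i = 0 then c * f w else 0)"
    by (rule sum.cong) auto
  thus "fa_mult (\<lambda>w. if w = [] then c else 0) f w = fa_smult c f w"
    unfolding fa_mult_def fa_smult_def by simp
qed

lemma fa_mult_constR: "fa_mult f (\<lambda>w. if w = [] then c else 0) = fa_smult c f"
proof (rule ext)
  fix w
  have "(\<Sum>i\<le>length w. f (take i w) * (if drop i w = [] then c else 0)) =
        (\<Sum>i\<le>length w. if i = length w then c * f w else 0)"
    by (rule sum.cong) auto
  thus "fa_mult f (\<lambda>w. if w = [] then c else 0) w = fa_smult c f w"
    unfolding fa_mult_def fa_smult_def by simp
qed

lemma fa_mult_distR: "fa_mult (fa_add f g) h = fa_add (fa_mult f h) (fa_mult g h)"
  unfolding fa_mult_def fa_add_def by (simp add: distrib_right sum.distrib)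
lemma fa_mult_distL: "fa_mult h (fa_add f g) = fa_add (fa_mult h f) (fa_mult h g)"
  unfolding fa_mult_def fa_add_def by (simp add: distrib_left sum.distrib)

lemma carrier_mult:
  assumes f: "f \<in> fa_carrier" and g: "g \<in> fa_carrier"
  shows "fa_mult f g \<in> fa_carrier"
proof -
  have "{w. fa_mult f g w \<noteq> 0} \<subseteq> (\<lambda>p. fst p @ snd p) ` ({w. f w \<noteq> 0} \<times> {w. g w \<noteq> 0})"
  proof
    fix w assume "w \<in> {w. fa_mult f g w \<noteq> 0}"
    hence "(\<Sum>p\<in>sp w. f (fst p) * g (snd p)) \<noteq> 0" by (simp add: fa_mult_sp)
    then obtain p where "p \<in> sp w" "f (fst p) * g (snd p) \<noteq> 0"
      using sum.not_neutral_contains_not_neutral by blast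
    thus "w \<in> (\<lambda>p. fst p @ snd p) ` ({w. f w \<noteq> 0} \<times> {w. g w \<noteq> 0})"
      by (intro image_eqI[of w _ p]) (auto simp: mem_Times_iff)
  qed
  moreover have "finite ((\<lambda>p. fst p @ snd p) ` ({w. f w \<noteq> 0} \<times> {w. g w \<noteq> 0}))"
    using f g by (simp add: fa_carrier_def)
  ultimately show ?thesis unfolding fa_carrier_def by (auto intro: finite_subset)
qed

lemma carrier_add: "f \<in> fa_carrier \<Longrightarrow> g \<in> fa_carrier \<Longrightarrow> fa_add f g \<in> fa_carrier"
  unfolding fa_carrier_def fa_add_def
  by (auto intro: finite_subset[of _ "{w. f w \<noteq> 0} \<union> {w. g w \<noteq> 0}"])
lemma carrier_sub: "f \<in> fa_carrier \<Longrightarrow> g \<in> fa_carrier \<Longrightarrow> fa_sub f g \<in> fa_carrier"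
  unfolding fa_carrier_def fa_sub_def
  by (auto intro: finite_subset[of _ "{w. f w \<noteq> 0} \<union> {w. g w \<noteq> 0}"])
lemma carrier_smult: "f \<in> fa_carrier \<Longrightarrow> fa_smult c f \<in> fa_carrier"
  unfolding fa_carrier_def fa_smult_def
  by (auto intro: finite_subset[of _ "{w. f w \<noteq> 0}"])
lemma carrier_uminus: "f \<in> fa_carrier \<Longrightarrow> (\<lambda>w. - f w) \<in> fa_carrier"
  unfolding fa_carrier_def by simp
lemma carrier_const: "(\<lambda>w. if w = [] then c else 0) \<in> fa_carrier"
  unfolding fa_carrier_def by (auto intro: finite_subset[of _ "{[]}"])
lemma carrier_zero: "fa_zero \<in> fa_carrier" unfolding fa_carrier_def fa_zero_def by simp
lemma carrier_one: "fa_one \<in> fa_carrier" unfolding fa_one_def by (rule carrier_const)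
lemma carrier_var: "fa_var i \<in> fa_carrier"
  unfolding fa_carrier_def fa_var_def by (auto intro: finite_subset[of _ "{[i]}"])

typedef (overloaded) ('k::field) nc = "fa_carrier :: 'k fa set" morphisms Rp Ab
  using carrier_zero by blast

setup_lifting type_definition_nc

instantiation nc :: (field) ring_1
begin
lift_definition zero_nc :: "'a nc" is fa_zero by (rule carrier_zero)
lift_definition one_nc :: "'a nc" is fa_one by (rule carrier_one)
lift_definition plus_nc :: "'a nc \<Rightarrow> 'a nc \<Rightarrow> 'a nc" is fa_add by (rule carrier_add)
lift_definition minus_nc :: "'a nc \<Rightarrow> 'a nc \<Rightarrow> 'a nc" is fa_sub by (rule carrier_sub)
lift_definition uminus_nc :: "'a nc \<Rightarrow> 'a nc" is "\<lambda>f w. - f w" by (rule carrier_uminus)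
lift_definition times_nc :: "'a nc \<Rightarrow> 'a nc \<Rightarrow> 'a nc" is fa_mult by (rule carrier_mult)
instance
proof
  fix a b c :: "'a nc"
  show "a * b * c = a * (b * c)" by transfer (rule fa_mult_assoc)
  show "1 * a = a" by transfer (simp add: fa_one_def fa_mult_constL fa_smult_def)
  show "a * 1 = a" by transfer (simp add: fa_one_def fa_mult_constR fa_smult_def)
  show "(a + b) * c = a * c + b * c" by transfer (rule fa_mult_distR)
  show "a * (b + c) = a * b + a * c" by transfer (rule fa_mult_distL)
  show "a + b + c = a + (b + c)" by transfer (simp add: fa_add_def add.assoc)
  show "a + b = b + a" by transfer (simp add: fa_add_def add.commute)
  show "0 + a = a" by transfer (simp add: fa_add_def fa_zero_def)
  show "- a + a = 0" by transfer (simp add: fa_add_def fa_zero_def)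
  show "a - b = a + - b" by transfer (simp add: fa_add_def fa_sub_def)
  show "(0::'a nc) \<noteq> 1" by transfer (simp add: fa_zero_def fa_one_def fun_eq_iff)
qed
end


lemma Rp_mult: "fa_mult (Rp x) (Rp y) = Rp (x * y)" by (simp add: times_nc.rep_eq)
lemma Rp_add: "fa_add (Rp x) (Rp y) = Rp (x + y)" by (simp add: plus_nc.rep_eq)
lemma Rp_sub: "fa_sub (Rp x) (Rp y) = Rp (x - y)" by (simp add: minus_nc.rep_eq)
lemma Rp_one: "Rp 1 = fa_one" by (simp add: one_nc.rep_eq)
lemma Rp_zero: "Rp 0 = fa_zero" by (simp add: zero_nc.rep_eq)
lemma Rp_uminus: "Rp (- x) = fa_smult (-1) (Rp x)" by (simp add: uminus_nc.rep_eq fa_smult_def)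
lemma Rp_in: "Rp x \<in> fa_carrier" using Rp by blast
lemma Rp_pow: "fa_pow (Rp x) n = Rp (x ^ n)"
  by (induct n) (simp_all add: fa_pow_def Rp_one Rp_mult)

lift_definition nc_const :: "'a::field \<Rightarrow> 'a nc" is "\<lambda>c w. if w = [] then c else 0"
  by (rule carrier_const)

lemma Rp_smult: "fa_smult c (Rp x) = Rp (nc_const c * x)"
  by (simp add: times_nc.rep_eq nc_const.rep_eq fa_mult_constL)

lemma nc_const_comm: "nc_const c * x = x * nc_const c"
  by transfer (simp add: fa_mult_constL fa_mult_constR)

lemma nc_const_add: "nc_const (a + b) = nc_const a + nc_const b"
  by transfer (auto simp: fa_add_def)
lemma nc_const_diff: "nc_const (a - b) = nc_const a - nc_const b"
  by transfer (auto simp: fa_sub_def)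
lemma nc_const_mult: "nc_const (a * b) = nc_const a * nc_const b"
  by transfer (auto simp: fa_mult_constL fa_smult_def)
lemma nc_const_0: "nc_const 0 = 0" by transfer (auto simp: fa_zero_def)
lemma nc_const_1: "nc_const 1 = 1" by transfer (auto simp: fa_one_def)
lemma nc_const_pow: "nc_const (a ^ n) = nc_const a ^ n"
  by (induct n) (simp_all add: nc_const_1 nc_const_mult)
lemma nc_const_sum: "nc_const (sum F A) = (\<Sum>x\<in>A. nc_const (F x))"
  by (induct A rule: infinite_finite_induct) (simp_all add: nc_const_0 nc_const_add)

definition ev :: "(nat \<Rightarrow> 'a::field nc) \<Rightarrow> nat list \<Rightarrow> 'a nc" where
  "ev img w = prod_list (map img w)"

lemma ev_append: "ev img (a @ b) = ev img a * ev img b"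
  by (simp add: ev_def)

definition Phi :: "(nat \<Rightarrow> 'a::field nc) \<Rightarrow> 'a fa \<Rightarrow> 'a nc" where
  "Phi img f = (\<Sum>w\<in>{w. f w \<noteq> 0}. nc_const (f w) * ev img w)"

lemma Phi_sup:
  assumes "finite S" "{w. f w \<noteq> 0} \<subseteq> S"
  shows "Phi img f = (\<Sum>w\<in>S. nc_const (f w) * ev img w)"
  unfolding Phi_def by (rule sum.mono_neutral_left) (use assms in \<open>auto simp: nc_const_0\<close>)

lemma Phi_add:
  assumes f: "f \<in> fa_carrier" and g: "g \<in> fa_carrier"
  shows "Phi img (fa_add f g) = Phi img f + Phi img g"
proof -
  let ?S = "{w. f w \<noteq> 0} \<union> {w. g w \<noteq> 0}"
  have fin: "finite ?S" using f g by (simp add: fa_carrier_def)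
  show ?thesis
  proof -
    have s1: "{w. f w \<noteq> 0} \<subseteq> ?S" and s2: "{w. g w \<noteq> 0} \<subseteq> ?S"
      and s3: "{w. fa_add f g w \<noteq> 0} \<subseteq> ?S" by (auto simp: fa_add_def)
    show ?thesis
      unfolding Phi_sup[OF fin s1] Phi_sup[OF fin s2] Phi_sup[OF fin s3]
      by (auto simp: fa_add_def nc_const_add distrib_right sum.distrib)
  qed
qed

lemma Phi_sub:
  assumes f: "f \<in> fa_carrier" and g: "g \<in> fa_carrier"
  shows "Phi img (fa_sub f g) = Phi img f - Phi img g"
proof -
  let ?S = "{w. f w \<noteq> 0} \<union> {w. g w \<noteq> 0}"
  have fin: "finite ?S" using f g by (simp add: fa_carrier_def)
  show ?thesis
  proof -
    have s1: "{w. f w \<noteq> 0} \<subseteq> ?S" and s2: "{w. g w \<noteq> 0} \<subseteq> ?S"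
      and s3: "{w. fa_sub f g w \<noteq> 0} \<subseteq> ?S" by (auto simp: fa_sub_def)
    show ?thesis
      unfolding Phi_sup[OF fin s1] Phi_sup[OF fin s2] Phi_sup[OF fin s3]
      by (auto simp: fa_sub_def nc_const_diff left_diff_distrib sum_subtractf)
  qed
qed

lemma Phi_smult:
  assumes f: "f \<in> fa_carrier"
  shows "Phi img (fa_smult c f) = nc_const c * Phi img f"
proof -
  let ?S = "{w. f w \<noteq> 0}"
  have fin: "finite ?S" using f by (simp add: fa_carrier_def)
  show ?thesis
  proof -
    have s3: "{w. fa_smult c f w \<noteq> 0} \<subseteq> ?S" by (auto simp: fa_smult_def)
    show ?thesis
      unfolding Phi_sup[OF fin subset_refl] Phi_sup[OF fin s3]
    by (auto simp: fa_smult_def nc_const_mult sum_distrib_left mult.assoc)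
  qed
qed

lemma Phi_one: "Phi img fa_one = 1"
  by (subst Phi_sup[of "{[]}"]) (auto simp: fa_one_def nc_const_1 ev_def)

lemma Phi_var: "Phi img (fa_var i) = img i"
  by (subst Phi_sup[of "{[i]}"]) (auto simp: fa_var_def nc_const_1 ev_def)

lemma Phi_mult:
  assumes f: "f \<in> fa_carrier" and g: "g \<in> fa_carrier"
  shows "Phi img (fa_mult f g) = Phi img f * Phi img g"
proof -
  let ?Sf = "{w. f w \<noteq> 0}" and ?Sg = "{w. g w \<noteq> 0}"
  let ?c = "\<lambda>p::nat list \<times> nat list. fst p @ snd p"
  let ?S = "?c ` (?Sf \<times> ?Sg)"
  let ?G = "\<lambda>p. nc_const (f (fst p)) * ev img (fst p) * (nc_const (g (snd p)) * ev img (snd p))"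
  have fSf: "finite ?Sf" and fSg: "finite ?Sg" using f g by (auto simp: fa_carrier_def)
  have fS: "finite ?S" using fSf fSg by simp
  have sub: "{w. fa_mult f g w \<noteq> 0} \<subseteq> ?S"
  proof
    fix w assume "w \<in> {w. fa_mult f g w \<noteq> 0}"
    hence "(\<Sum>p\<in>sp w. f (fst p) * g (snd p)) \<noteq> 0" by (simp add: fa_mult_sp)
    then obtain p where "p \<in> sp w" "f (fst p) * g (snd p) \<noteq> 0"
      using sum.not_neutral_contains_not_neutral by blast
    thus "w \<in> ?S" by (intro image_eqI[of w _ p]) (auto simp: mem_Times_iff)
  qed
  have G: "nc_const (f (fst p) * g (snd p)) * ev img (?c p) = ?G p" for p
    by (simp add: nc_const_mult ev_append mult.assoc)
       (metis mult.assoc nc_const_comm)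
  have "Phi img (fa_mult f g) = (\<Sum>w\<in>?S. \<Sum>p\<in>sp w. ?G p)"
    unfolding Phi_sup[OF fS sub]
  proof (rule sum.cong[OF refl])
    fix w
    have "nc_const (fa_mult f g w) * ev img w = (\<Sum>p\<in>sp w. nc_const (f (fst p) * g (snd p)) * ev img (?c p))"
      by (simp add: fa_mult_sp nc_const_sum sum_distrib_right)
    also have "\<dots> = (\<Sum>p\<in>sp w. ?G p)" by (simp only: G)
    finally show "nc_const (fa_mult f g w) * ev img w = (\<Sum>p\<in>sp w. ?G p)" .
  qed
  also have "\<dots> = (\<Sum>w\<in>?S. \<Sum>p\<in>{p \<in> ?Sf \<times> ?Sg. ?c p = w}. ?G p)"
  proof (rule sum.cong[OF refl], rule sum.mono_neutral_right)
    fix w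
    show "finite (sp w)" by (rule finite_sp)
    show "{p \<in> ?Sf \<times> ?Sg. ?c p = w} \<subseteq> sp w" by auto
    show "\<forall>p\<in>sp w - {p \<in> ?Sf \<times> ?Sg. ?c p = w}. ?G p = 0"
      by (auto simp: nc_const_0 mem_Times_iff)
  qed
  also have "\<dots> = (\<Sum>p\<in>?Sf \<times> ?Sg. ?G p)"
    by (rule sum.group) (use fSf fSg in auto)
  also have "\<dots> = Phi img f * Phi img g"
    unfolding Phi_def sum_product sum.cartesian_product by (simp add: mult.assoc case_prod_beta)
  finally show ?thesis .
qed

lemma endo_Phi: "fa_endo (\<lambda>f. Rp (Phi img f))"
  unfolding fa_endo_def
  by (auto simp: Rp_in Phi_add Phi_mult Phi_smult Phi_one Rp_add Rp_mult Rp_smult Rp_one)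


lemma nc_pow_const: "(nc_const a * V) ^ n = nc_const (a ^ n) * V ^ n"
proof (induct n)
  case 0 show ?case by (simp add: nc_const_1)
next
  case (Suc n)
  have "(nc_const a * V) ^ Suc n = nc_const a * (V * nc_const (a ^ n)) * V ^ n"
    by (simp add: Suc mult.assoc)
  also have "\<dots> = nc_const a * (nc_const (a ^ n) * V) * V ^ n" by (simp only: nc_const_comm)
  also have "\<dots> = nc_const (a ^ Suc n) * V ^ Suc n" by (simp add: nc_const_mult mult.assoc)
  finally show ?case .
qed

lemma kap_const: "kap q U (nc_const a * V) = nc_const (a ^ Suc q) * kap q U V"
proof -
  have c1: "cm U (nc_const a * V) = nc_const a * cm U V"
    unfolding cm_def by (simp add: right_diff_distrib mult.assoc[symmetric] nc_const_comm[of a U])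
  have "kap q U (nc_const a * V) = nc_const a * cm U V * U^q * (nc_const (a^q) * V^q)"
    unfolding kap_def c1 nc_pow_const ..
  also have "\<dots> = nc_const a * ((cm U V * U^q) * nc_const (a^q)) * V^q"
    by (simp only: mult.assoc)
  also have "\<dots> = nc_const a * (nc_const (a^q) * (cm U V * U^q)) * V^q"
    by (simp only: nc_const_comm)
  also have "\<dots> = nc_const (a ^ Suc q) * kap q U V"
    by (simp add: kap_def nc_const_mult mult.assoc)
  finally show ?thesis .
qed

lemma T3_mem:
  assumes "\<And>I. fa_T_ideal I \<Longrightarrow> fa_comm3 (fa_var 1) (fa_var 2) (fa_var 3) \<in> I \<Longrightarrow> f \<in> I"
  shows "f \<in> T3"
  unfolding T3_def using assms by blast

lemma comm3_in:
  assumes T: "fa_T_ideal I" and g: "fa_comm3 (fa_var 1) (fa_var 2) (fa_var 3) \<in> I"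
  shows "Rp (cm (cm a b) c) \<in> I"
proof -
  define img where "img = (\<lambda>i::nat. if i = 1 then a else if i = 2 then b else c)"
  have "(\<lambda>f. Rp (Phi img f)) ` I \<subseteq> I" using T endo_Phi unfolding fa_T_ideal_def by blast
  with g have "Rp (Phi img (fa_comm3 (fa_var 1) (fa_var 2) (fa_var 3))) \<in> I" by blast
  moreover have "Phi img (fa_comm3 (fa_var 1) (fa_var 2) (fa_var 3)) = cm (cm a b) c"
    unfolding fa_comm3_def fa_comm_def
    by (simp add: Phi_sub Phi_mult Phi_var carrier_mult carrier_sub carrier_var cm_def img_def)
  ultimately show ?thesis by simp
qed

lemma lie2_inst:
  assumes T: "fa_T_ideal I" and g: "fa_comm3 (fa_var 1) (fa_var 2) (fa_var 3) \<in> I"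
    and two: "(2::'k::field) \<noteq> 0"
  shows "lie2 {x::'k nc. Rp x \<in> I}"
proof
  have id: "fa_ideal I" using T by (simp add: fa_T_ideal_def)
  hence sub: "I \<subseteq> fa_carrier" and z: "fa_zero \<in> I"
    and ad: "\<And>a b. a\<in>I \<Longrightarrow> b\<in>I \<Longrightarrow> fa_add a b \<in> I"
    and sm: "\<And>a c. a\<in>I \<Longrightarrow> fa_smult c a \<in> I"
    and ml: "\<And>a r. a\<in>I \<Longrightarrow> r\<in>fa_carrier \<Longrightarrow> fa_mult r a \<in> I \<and> fa_mult a r \<in> I"
    unfolding fa_ideal_def by blast+
  fix x y r a b c :: "'k nc"
  show "0 \<in> {x. Rp x \<in> I}" using z by (simp add: Rp_zero)
  show "x \<in> {x. Rp x \<in> I} \<Longrightarrow> y \<in> {x. Rp x \<in> I} \<Longrightarrow> x + y \<in> {x. Rp x \<in> I}"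
    using ad[of "Rp x" "Rp y"] by (simp add: Rp_add)
  show "x \<in> {x. Rp x \<in> I} \<Longrightarrow> - x \<in> {x. Rp x \<in> I}"
    using sm[of "Rp x" "-1"] by (simp add: Rp_uminus)
  show "x \<in> {x. Rp x \<in> I} \<Longrightarrow> r * x \<in> {x. Rp x \<in> I}"
    using ml[of "Rp x" "Rp r"] Rp_in[of r] by (simp add: Rp_mult)
  show "x \<in> {x. Rp x \<in> I} \<Longrightarrow> x * r \<in> {x. Rp x \<in> I}"
    using ml[of "Rp x" "Rp r"] Rp_in[of r] by (simp add: Rp_mult)
  show "cm (cm a b) c \<in> {x. Rp x \<in> I}" using comm3_in[OF T g] by simp
  assume "x + x \<in> {x. Rp x \<in> I}"
  hence "fa_smult (1/2) (Rp (x + x)) \<in> I" by (intro sm) simp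
  moreover have "fa_smult (1/2) (Rp (x + x)) = Rp x"
    unfolding Rp_add[symmetric] fa_smult_def fa_add_def using two
    by (simp add: fun_eq_iff field_simps)
  ultimately show "x \<in> {x. Rp x \<in> I}" by simp
qed

theorem lemma2p5:
  fixes p :: nat
  assumes "prime p" and "p > 2" and "CHAR('k::field) = p"
  shows "(\<forall>u\<in>(fa_carrier :: 'k fa set). \<forall>v\<in>fa_carrier. \<forall>w\<in>fa_carrier.
            fa_sub (fa_kappa p u (fa_mult v w))
                   (fa_add (fa_mult (fa_pow v p) (fa_kappa p u w))
                           (fa_mult (fa_pow w p) (fa_kappa p u v))) \<in> T3)
       \<and> (\<forall>u\<in>(fa_carrier0 :: 'k fa set). \<forall>v\<in>fa_carrier0. \<forall>\<alpha>::'k.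
            fa_kappa p u (fa_smult \<alpha> v) = fa_smult (\<alpha> ^ p) (fa_kappa p u v))"
proof -
  have two: "(2::'k) \<noteq> 0"
  proof
    assume "(2::'k) = 0"
    hence "of_nat 2 = (0::'k)" by simp
    hence "p dvd 2" using assms(3) by (simp only: of_nat_eq_0_iff_char_dvd)
    thus False using assms(2) by (auto dest: dvd_imp_le)
  qed
  obtain q where pq: "p = Suc q" using assms(2) by (cases p) auto
  have kap_eq: "fa_kappa p (Rp x) (Rp y) = Rp (kap q x y)" for x y :: "'k nc"
    unfolding fa_kappa_def fa_comm_def kap_def cm_def pq
    by (simp add: Rp_mult Rp_sub Rp_pow)
  have rp: "\<And>f. f \<in> fa_carrier \<Longrightarrow> f = Rp (Ab f)" by (simp add: Ab_inverse)
  have P1: "fa_sub (fa_kappa p u (fa_mult v w))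
                   (fa_add (fa_mult (fa_pow v p) (fa_kappa p u w))
                           (fa_mult (fa_pow w p) (fa_kappa p u v))) \<in> T3"
    if u: "u \<in> fa_carrier" and v: "v \<in> fa_carrier" and w: "w \<in> fa_carrier" for u v w :: "'k fa"
  proof -
    define U where "U = Ab u"
    define V where "V = Ab v"
    define W where "W = Ab w"
    have "u = Rp U" "v = Rp V" "w = Rp W" using rp u v w by (simp_all add: U_def V_def W_def)
    hence e: "fa_sub (fa_kappa p u (fa_mult v w))
                   (fa_add (fa_mult (fa_pow v p) (fa_kappa p u w))
                           (fa_mult (fa_pow w p) (fa_kappa p u v))) =
           Rp (kap q U (V*W) - (V^Suc q * kap q U W + W^Suc q * kap q U V))"
      by (simp only: Rp_mult kap_eq Rp_pow Rp_add Rp_sub) (simp only: pq)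
    show ?thesis unfolding e
    proof (rule T3_mem)
      fix I assume T: "fa_T_ideal (I::'k fa set)" and g: "fa_comm3 (fa_var 1) (fa_var 2) (fa_var 3) \<in> I"
      interpret L: lie2 "{x::'k nc. Rp x \<in> I}" by (rule lie2_inst[OF T g two])
      show "Rp (kap q U (V*W) - (V^Suc q * kap q U W + W^Suc q * kap q U V)) \<in> I"
        using L.main1[of q U V W] by simp
    qed
  qed
  have P2: "fa_kappa p u (fa_smult \<alpha> v) = fa_smult (\<alpha> ^ p) (fa_kappa p u v)"
    if u: "u \<in> fa_carrier" and v: "v \<in> fa_carrier" for u v :: "'k fa" and \<alpha> :: 'k
  proof -
    have "u = Rp (Ab u)" "v = Rp (Ab v)" by (simp_all add: Ab_inverse u v)
    hence "fa_kappa p u (fa_smult \<alpha> v) = Rp (kap q (Ab u) (nc_const \<alpha> * Ab v))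
       \<and> fa_smult (\<alpha> ^ p) (fa_kappa p u v) = Rp (nc_const (\<alpha> ^ Suc q) * kap q (Ab u) (Ab v))"
      by (metis Rp_smult kap_eq pq)
    thus ?thesis by (simp add: kap_const)
  qed
  show ?thesis using P1 P2 by (auto simp: fa_carrier0_def)
qed

end
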